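(* Let $\mathbb{X}=\mathbb{X}(p_1,p_2,p_3)$ be a weighted projective line with $\chi_{\mathbb{X}}<0$, and let $\mathcal{S}=\{\vec{x}\in\mathbb{L}\mid 0\leq\vec{x}\leq n\vec{\omega}+\vec{c}\text{ for all integers }n\geq 2\}$. If $a\vec{x}_i\in\mathcal{S}$ for some integer $a>0$ and some $1\leq i\leq 3$, then $(p_i-a+j)\vec{\omega}>0$ for every $1\leq j\leq a$.
   Context: $\mathbb{L}=\mathbb{L}(p_1,p_2,p_3)$ ($p_i\geq 2$) is the abelian group generated by $\vec{x}_1,\vec{x}_2,\vec{x}_3$ with $p_1\vec{x}_1=p_2\vec{x}_2=p_3\vec{x}_3=:\vec{c}$; $\vec{x}\geq\vec{y}$ means $\vec{x}-\vec{y}$ is a nonnegative integer combination of $\vec{x}_1,\vec{x}_2,\vec{x}_3$, and $\vec{x}>\vec{y}$ means $\vec{x}\geq\vec{y}$ and $\vec{x}\neq\vec{y}$. $\vec{\omega}=\vec{c}-\sum_i\vec{x}_i$ and $\chi_{\mathbb{X}}=2-\sum_{i=1}^3(1-1/p_i)$. *)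

theory Defs
  imports Complex_Main
begin

text \<open>The string group L(p1,p2,p3) is presented as Z^3 (coefficients of x1,x2,x3)
modulo the subgroup generated by p1 x1 - p2 x2 and p1 x1 - p3 x3.
An element of L is represented by an integer triple; equality in L is eqL.\<close>

type_synonym Lrep = "int \<times> int \<times> int"

definition Ladd :: "Lrep \<Rightarrow> Lrep \<Rightarrow> Lrep" where
  "Ladd u v = (fst u + fst v, fst (snd u) + fst (snd v), snd (snd u) + snd (snd v))"

definition Lsub :: "Lrep \<Rightarrow> Lrep \<Rightarrow> Lrep" where
  "Lsub u v = (fst u - fst v, fst (snd u) - fst (snd v), snd (snd u) - snd (snd v))"

definition Lscale :: "int \<Rightarrow> Lrep \<Rightarrow> Lrep" where
  "Lscale k u = (k * fst u, k * fst (snd u), k * snd (snd u))"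

definition Lzero :: Lrep where "Lzero = (0, 0, 0)"

definition Lgen :: "nat \<Rightarrow> Lrep" where
  "Lgen i = (if i = 1 then (1,0,0) else if i = 2 then (0,1,0) else (0,0,1))"

definition pw :: "nat \<Rightarrow> nat \<Rightarrow> nat \<Rightarrow> nat \<Rightarrow> nat" where
  "pw p1 p2 p3 i = (if i = 1 then p1 else if i = 2 then p2 else p3)"

definition eqL :: "nat \<Rightarrow> nat \<Rightarrow> nat \<Rightarrow> Lrep \<Rightarrow> Lrep \<Rightarrow> bool" where
  "eqL p1 p2 p3 u v \<longleftrightarrow> (\<exists>k1 k2 :: int.
      Lsub u v = (k1 * int p1 + k2 * int p1, - k1 * int p2, - k2 * int p3))"

definition Lc :: "nat \<Rightarrow> nat \<Rightarrow> nat \<Rightarrow> Lrep" where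
  "Lc p1 p2 p3 = Lscale (int p1) (Lgen 1)"

definition Lomega :: "nat \<Rightarrow> nat \<Rightarrow> nat \<Rightarrow> Lrep" where
  "Lomega p1 p2 p3 = Lsub (Lsub (Lsub (Lc p1 p2 p3) (Lgen 1)) (Lgen 2)) (Lgen 3)"

definition geL :: "nat \<Rightarrow> nat \<Rightarrow> nat \<Rightarrow> Lrep \<Rightarrow> Lrep \<Rightarrow> bool" where
  "geL p1 p2 p3 x y \<longleftrightarrow> (\<exists>n1 n2 n3 :: nat.
      eqL p1 p2 p3 (Lsub x y) (int n1, int n2, int n3))"

definition gtL :: "nat \<Rightarrow> nat \<Rightarrow> nat \<Rightarrow> Lrep \<Rightarrow> Lrep \<Rightarrow> bool" where
  "gtL p1 p2 p3 x y \<longleftrightarrow> geL p1 p2 p3 x y \<and> \<not> eqL p1 p2 p3 x y"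

definition chiX :: "nat \<Rightarrow> nat \<Rightarrow> nat \<Rightarrow> real" where
  "chiX p1 p2 p3 = 2 - ((1 - 1 / real p1) + (1 - 1 / real p2) + (1 - 1 / real p3))"

definition inS :: "nat \<Rightarrow> nat \<Rightarrow> nat \<Rightarrow> Lrep \<Rightarrow> bool" where
  "inS p1 p2 p3 x \<longleftrightarrow> geL p1 p2 p3 x Lzero \<and>
     (\<forall>n :: int. n \<ge> 2 \<longrightarrow>
        geL p1 p2 p3 (Ladd (Lscale n (Lomega p1 p2 p3)) (Lc p1 p2 p3)) x)"

end

theory Submission
  imports Defs
begin

lemma eqL_iff:
  "eqL p1 p2 p3 u v \<longleftrightarrow> (\<exists>t1 t2 t3::int. t1+t2+t3=0 \<and>
      Lsub u v = (t1*int p1, t2*int p2, t3*int p3))"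
  unfolding eqL_def
proof
  assume "\<exists>k1 k2. Lsub u v = (k1 * int p1 + k2 * int p1, - k1 * int p2, - k2 * int p3)"
  then obtain k1 k2 where "Lsub u v = (k1 * int p1 + k2 * int p1, - k1 * int p2, - k2 * int p3)" by blast
  then show "\<exists>t1 t2 t3::int. t1+t2+t3=0 \<and> Lsub u v = (t1*int p1, t2*int p2, t3*int p3)"
    by (intro exI[of _ "k1+k2"] exI[of _ "-k1"] exI[of _ "-k2"]) (simp add: algebra_simps)
next
  assume "\<exists>t1 t2 t3::int. t1+t2+t3=0 \<and> Lsub u v = (t1*int p1, t2*int p2, t3*int p3)"
  then obtain t1 t2 t3 :: int where "t1+t2+t3=0" "Lsub u v = (t1*int p1, t2*int p2, t3*int p3)" by blast
  show "\<exists>k1 k2. Lsub u v = (k1 * int p1 + k2 * int p1, - k1 * int p2, - k2 * int p3)"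
  proof (rule exI[of _ "-t2"], rule exI[of _ "-t3"])
    have h: "- t2 * int p1 + - t3 * int p1 = t1 * int p1" using \<open>t1+t2+t3=0\<close> by algebra
    show "Lsub u v = (- t2 * int p1 + - t3 * int p1, - (- t2) * int p2, - (- t3) * int p3)"
      using \<open>Lsub u v = _\<close> h by simp
  qed
qed

lemma div_mult_le_int: "(0::int) < Q \<Longrightarrow> x div Q * Q \<le> x"
  by (metis add_le_cancel_left div_mult_mod_eq le_add_same_cancel1 pos_mod_sign)

lemma div_geD: "(0::int) < Q \<Longrightarrow> x div Q \<ge> q \<Longrightarrow> x \<ge> q*Q"
proof -
  assume a: "0 < Q" "x div Q \<ge> q"
  have "x div Q * Q \<le> x" using a(1)
    by (metis add_le_cancel_left div_mult_mod_eq le_add_same_cancel1 pos_mod_sign)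
  moreover have "q * Q \<le> x div Q * Q" using a by (simp add: mult_right_mono)
  ultimately show ?thesis by linarith
qed

lemma div_geI: "(0::int) < Q \<Longrightarrow> x \<ge> q*Q \<Longrightarrow> x div Q \<ge> q"
  by (metis zdiv_mono1 nonzero_mult_div_cancel_left order_class.order_eq_iff linorder_not_less mult.commute)

lemma div_leI: "(0::int) < Q \<Longrightarrow> x < (q+1)*Q \<Longrightarrow> x div Q \<le> q"
  by (smt (verit, best) mod_mult_self2_is_0 nonzero_mult_div_cancel_right verit_le_mono_div_int)

lemma div_eqI: "(0::int) < Q \<Longrightarrow> q*Q \<le> x \<Longrightarrow> x < (q+1)*Q \<Longrightarrow> x div Q = q"
  using div_leI div_geI by (meson order_antisym)

lemma geL_iff:
  assumes "p1 > 0" "p2 > 0" "p3 > 0" "Lsub x y = (d1, d2, d3)"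
  shows "geL p1 p2 p3 x y \<longleftrightarrow> d1 div int p1 + d2 div int p2 + d3 div int p3 \<ge> 0"
proof
  assume "geL p1 p2 p3 x y"
  then obtain n1 n2 n3 :: nat where "eqL p1 p2 p3 (Lsub x y) (int n1, int n2, int n3)"
    unfolding geL_def by blast
  then obtain t1 t2 t3 :: int where t: "t1+t2+t3=0"
    "Lsub (Lsub x y) (int n1, int n2, int n3) = (t1*int p1, t2*int p2, t3*int p3)"
    unfolding eqL_iff by blast
  then have e: "d1 = int n1 + t1 * int p1" "d2 = int n2 + t2 * int p2" "d3 = int n3 + t3 * int p3"
    using assms(4) by (auto simp: Lsub_def)
  have "d1 div int p1 \<ge> t1" using assms(1) unfolding e(1) by (simp add: zdiv_int[symmetric])
  moreover have "d2 div int p2 \<ge> t2" using assms(2) unfolding e(2) by (simp add: zdiv_int[symmetric])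
  moreover have "d3 div int p3 \<ge> t3" using assms(3) unfolding e(3) by (simp add: zdiv_int[symmetric])
  ultimately show "d1 div int p1 + d2 div int p2 + d3 div int p3 \<ge> 0" using t(1) by linarith
next
  assume h: "d1 div int p1 + d2 div int p2 + d3 div int p3 \<ge> 0"
  define s where "s = d1 div int p1 + d2 div int p2 + d3 div int p3"
  define t1 where "t1 = d1 div int p1 - s"
  define t2 where "t2 = d2 div int p2"
  define t3 where "t3 = d3 div int p3"
  have m1: "d1 - t1 * int p1 \<ge> 0"
  proof -
    have "d1 - t1 * int p1 = d1 mod int p1 + s * int p1"
      unfolding t1_def by (simp add: algebra_simps minus_div_mult_eq_mod[symmetric])
    moreover have "s * int p1 \<ge> 0" using h s_def by simp
    moreover have "d1 mod int p1 \<ge> 0" using assms(1) by simp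
    ultimately show ?thesis by linarith
  qed
  have m2: "d2 - t2 * int p2 \<ge> 0"
    unfolding t2_def using assms(2) div_mult_le_int[of "int p2" d2] by simp
  have m3: "d3 - t3 * int p3 \<ge> 0"
    unfolding t3_def using assms(3) div_mult_le_int[of "int p3" d3] by simp
  have "eqL p1 p2 p3 (Lsub x y) (int (nat (d1 - t1 * int p1)), int (nat (d2 - t2 * int p2)), int (nat (d3 - t3 * int p3)))"
    unfolding eqL_iff
    apply (rule exI[of _ t1], rule exI[of _ t2], rule exI[of _ t3])
    using m1 m2 m3 assms(4) by (simp add: Lsub_def t1_def t2_def t3_def s_def)
  then show "geL p1 p2 p3 x y" unfolding geL_def by blast
qed

lemma core:
  fixes P Q R a :: int
  assumes "P \<ge> 2" "Q \<ge> 2" "R \<ge> 2" "a > 0"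
    and H: "\<And>n. n \<ge> 2 \<Longrightarrow> n + 1 + (-n-a) div P + (-n) div Q + (-n) div R \<ge> 0"
    and k: "P - a + 1 \<le> k" "k \<le> P"
  shows "k + (-k) div P + (-k) div Q + (-k) div R \<ge> 0 \<and> k \<ge> 1"
proof -
  have q2: "(-2) div Q = -1" using assms(2) by (intro div_eqI) auto
  have r2: "(-2) div R = -1" using assms(3) by (intro div_eqI) auto
  have "(-2-a) div P \<ge> -1" using H[of 2] q2 r2 by simp
  then have "-2-a \<ge> -1*P" using div_geD[where Q=P and x="-2-a" and q="-1"] assms(1) by simp
  then have k3: "k \<ge> 3" using k by simp
  have "(-k-a) div P \<le> -2" using assms k by (intro div_leI) auto
  moreover have "(-k) div P = -1" using assms k k3 by (intro div_eqI) auto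
  ultimately show ?thesis using H[of k] k3 by simp
qed

lemma div_shift: "(0::int) < p \<Longrightarrow> (y + m*p) div p = y div p + m"
  by simp

lemma omega_scale: "Lscale k (Lomega p1 p2 p3) = (k*(int p1 - 1), -k, -k)"
  by (simp add: Lscale_def Lomega_def Lsub_def Lc_def Lgen_def algebra_simps)

lemma hypvec: "Lsub (Ladd (Lscale n (Lomega p1 p2 p3)) (Lc p1 p2 p3)) (Lscale a (Lgen i)) =
   ((-n - (if i=1 then a else 0)) + (n+1) * int p1, -n - (if i=2 then a else 0),
    -n - (if i\<noteq>1 \<and> i\<noteq>2 then a else 0))"
  by (simp add: Lscale_def Lomega_def Lsub_def Ladd_def Lc_def Lgen_def algebra_simps)

lemma ge_omega:
  assumes "p1 > 0" "p2 > 0" "p3 > 0"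
  shows "geL p1 p2 p3 (Lscale k (Lomega p1 p2 p3)) Lzero \<longleftrightarrow>
     (-k) div int p1 + k + (-k) div int p2 + (-k) div int p3 \<ge> 0"
proof -
  have L: "Lsub (Lscale k (Lomega p1 p2 p3)) Lzero = (-k + k * int p1, -k, -k)"
    by (simp add: omega_scale Lsub_def Lzero_def algebra_simps)
  have d: "(-k + k * int p1) div int p1 = (-k) div int p1 + k" using assms(1) by (intro div_shift) simp
  from geL_iff[OF assms L] show ?thesis unfolding d .
qed

lemma not_eq_omega:
  assumes "p1 > 0" "p2 > 0" "p3 > 0" "chiX p1 p2 p3 < 0" "k > 0"
  shows "\<not> eqL p1 p2 p3 (Lscale k (Lomega p1 p2 p3)) Lzero"
proof
  assume "eqL p1 p2 p3 (Lscale k (Lomega p1 p2 p3)) Lzero"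
  then obtain t1 t2 t3 :: int where t: "t1+t2+t3=0"
    "Lsub (Lscale k (Lomega p1 p2 p3)) Lzero = (t1*int p1, t2*int p2, t3*int p3)"
    unfolding eqL_iff by blast
  then have e: "k*(int p1 - 1) = t1 * int p1" "-k = t2 * int p2" "-k = t3 * int p3"
    by (auto simp: omega_scale Lsub_def Lzero_def)
  have f1: "real_of_int k * (real p1 - 1) = real_of_int t1 * real p1"
    using arg_cong[OF e(1), of real_of_int] by simp
  have f2: "- real_of_int k = real_of_int t2 * real p2"
    using arg_cong[OF e(2), of real_of_int] by simp
  have f3: "- real_of_int k = real_of_int t3 * real p3"
    using arg_cong[OF e(3), of real_of_int] by simp
  have r1: "real_of_int t1 = real_of_int k - real_of_int k / real p1"
    using f1 assms(1) by (simp add: field_simps)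
  have r2: "real_of_int t2 = - real_of_int k / real p2"
    using f2 assms(2) by (simp add: field_simps)
  have r3: "real_of_int t3 = - real_of_int k / real p3"
    using f3 assms(3) by (simp add: field_simps)
  have "real_of_int t1 + real_of_int t2 + real_of_int t3 = 0" using t(1) by (metis of_int_add of_int_0)
  then have "real_of_int k * (1 - 1/real p1 - 1/real p2 - 1/real p3) = 0"
    using r1 r2 r3 by (simp add: algebra_simps)
  moreover have "1 - 1/real p1 - 1/real p2 - 1/real p3 > 0" using assms(4) unfolding chiX_def by simp
  ultimately show False using assms(5) by simp
qed

theorem lemma5p2:
  fixes p1 p2 p3 :: nat and a :: int and i :: nat
  assumes "p1 \<ge> 2" and "p2 \<ge> 2" and "p3 \<ge> 2"
    and "chiX p1 p2 p3 < 0"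
    and "a > 0"
    and "1 \<le> i" and "i \<le> 3"
    and "inS p1 p2 p3 (Lscale a (Lgen i))"
  shows "\<forall>j :: int. 1 \<le> j \<and> j \<le> a \<longrightarrow>
           gtL p1 p2 p3 (Lscale (int (pw p1 p2 p3 i) - a + j) (Lomega p1 p2 p3)) Lzero"
proof (intro allI impI)
  fix j :: int
  assume j: "1 \<le> j \<and> j \<le> a"
  have pos: "p1 > 0" "p2 > 0" "p3 > 0" using assms(1-3) by auto
  define A1 where "A1 = (if i=1 then a else 0)"
  define A2 where "A2 = (if i=2 then a else 0)"
  define A3 where "A3 = (if i\<noteq>1 \<and> i\<noteq>2 then a else 0)"
  have Hv: "(-n - A1) div int p1 + (n+1) + (-n - A2) div int p2 + (-n - A3) div int p3 \<ge> 0"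
    if n: "n \<ge> 2" for n
  proof -
    have g: "geL p1 p2 p3 (Ladd (Lscale n (Lomega p1 p2 p3)) (Lc p1 p2 p3)) (Lscale a (Lgen i))"
      using assms(8) n unfolding inS_def by blast
    have L: "Lsub (Ladd (Lscale n (Lomega p1 p2 p3)) (Lc p1 p2 p3)) (Lscale a (Lgen i)) =
      ((-n - A1) + (n+1) * int p1, -n - A2, -n - A3)"
      unfolding hypvec A1_def A2_def A3_def by simp
    have d: "((-n - A1) + (n+1) * int p1) div int p1 = (-n - A1) div int p1 + (n+1)"
      using pos(1) by (intro div_shift) simp
    from g geL_iff[OF pos L] show ?thesis unfolding d by simp
  qed
  define k where "k = int (pw p1 p2 p3 i) - a + j"
  have main: "k + (-k) div int p1 + (-k) div int p2 + (-k) div int p3 \<ge> 0 \<and> k \<ge> 1"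
  proof (cases "i = 1")
    case True
    have H: "n + 1 + (-n-a) div int p1 + (-n) div int p2 + (-n) div int p3 \<ge> 0" if "n \<ge> 2" for n
      using Hv[OF that] True unfolding A1_def A2_def A3_def by simp
    have kk: "int p1 - a + 1 \<le> k" "k \<le> int p1" using j True unfolding k_def pw_def by auto
    show ?thesis using core[of "int p1" "int p2" "int p3" a k, OF _ _ _ assms(5) H kk] assms(1-3) by simp
  next
    case False
    show ?thesis
    proof (cases "i = 2")
      case True
      have H: "n + 1 + (-n-a) div int p2 + (-n) div int p1 + (-n) div int p3 \<ge> 0" if "n \<ge> 2" for n
        using Hv[OF that] True unfolding A1_def A2_def A3_def by simp
      have kk: "int p2 - a + 1 \<le> k" "k \<le> int p2" using j True unfolding k_def pw_def by auto
      show ?thesis using core[of "int p2" "int p1" "int p3" a k, OF _ _ _ assms(5) H kk] assms(1-3) by simp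
    next
      case F2: False
      have H: "n + 1 + (-n-a) div int p3 + (-n) div int p1 + (-n) div int p2 \<ge> 0" if "n \<ge> 2" for n
        using Hv[OF that] False F2 unfolding A1_def A2_def A3_def by simp
      have kk: "int p3 - a + 1 \<le> k" "k \<le> int p3" using j False F2 unfolding k_def pw_def by auto
      show ?thesis using core[of "int p3" "int p1" "int p2" a k, OF _ _ _ assms(5) H kk] assms(1-3) by simp
    qed
  qed
  have "geL p1 p2 p3 (Lscale k (Lomega p1 p2 p3)) Lzero"
    unfolding ge_omega[OF pos] using main by linarith
  moreover have "\<not> eqL p1 p2 p3 (Lscale k (Lomega p1 p2 p3)) Lzero"
    using not_eq_omega[OF pos assms(4)] main by simp
  ultimately show "gtL p1 p2 p3 (Lscale (int (pw p1 p2 p3 i) - a + j) (Lomega p1 p2 p3)) Lzero"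
    unfolding gtL_def k_def by simp
qed

end
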